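(* Let $m>2\left(\left(2C+\tfrac14\right)^{1/4}+\sqrt2\right)^2$ be an integer and $n=\lceil\log_2(m-3)\rceil$. Then the $m$-gonal form $$P_m(x_1)+2P_m(x_2)+4P_m(x_3)+\cdots+2^{n}P_m(x_{n+1})$$ is universal.
   Context: For an integer $m\ge 3$ and $x\in\mathbb Z$ put $P_m(x)=\frac{m-2}{2}x^2-\frac{m-4}{2}x$. An $m$-gonal form $\sum_i a_iP_m(x_i)$ (positive integer coefficients, integer variables) is universal if for every positive integer $N$ there are integers $x_i$ with $\sum_i a_iP_m(x_i)=N$. Standing assumption: $C$ is a fixed absolute constant such that for every $m\ge3$, every $m$-gonal form that represents every positive integer in $[1,C(m-2)]$ is universal. *)

theory Defs
  imports Complex_Main
begin

text \<open>The m-gonal number P_m(x) = ((m-2)x^2 - (m-4)x)/2; the numerator is always even.\<close>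
definition polyg :: "int \<Rightarrow> int \<Rightarrow> int" where
  "polyg m x = ((m - 2) * x ^ 2 - (m - 4) * x) div 2"

definition represents :: "int \<Rightarrow> int list \<Rightarrow> int \<Rightarrow> bool" where
  "represents m a N \<longleftrightarrow>
     (\<exists>x :: nat \<Rightarrow> int. (\<Sum>i<length a. a ! i * polyg m (x i)) = N)"

definition universal :: "int \<Rightarrow> int list \<Rightarrow> bool" where
  "universal m a \<longleftrightarrow> (\<forall>N::int. N \<ge> 1 \<longrightarrow> represents m a N)"

definition good_const :: "real \<Rightarrow> bool" where
  "good_const C \<longleftrightarrow>
     (\<forall>m::int. \<forall>a::int list. m \<ge> 3 \<longrightarrow> (\<forall>c\<in>set a. c > 0) \<longrightarrow>
        (\<forall>N::int. 1 \<le> N \<and> real_of_int N \<le> C * real_of_int (m - 2) \<longrightarrow> represents m a N) \<longrightarrow>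
        universal m a)"

end

theory Submission
  imports Defs
begin

definition tri :: "int \<Rightarrow> int" where "tri x = x * (x - 1) div 2"

lemma tri_mul: "x * (x - 1) = 2 * tri x"
proof -
  have "even (x * (x - 1))" by auto
  then show ?thesis unfolding tri_def by simp
qed

lemma tri_sym: "tri (1 - x) = tri x"
  unfolding tri_def by (simp add: algebra_simps)

lemma tri_nonneg: "tri x \<ge> 0"
proof -
  have "x * (x - 1) \<ge> 0"
    by (cases "x \<ge> 1") (auto intro: mult_nonneg_nonneg mult_nonpos_nonpos)
  then show ?thesis using tri_mul[of x] by simp
qed

lemma polyg_tri: "polyg m x = (m - 2) * tri x + x"
proof -
  have "(m - 2) * x ^ 2 - (m - 4) * x = 2 * ((m - 2) * tri x + x)"
    using tri_mul[of x] by (simp add: power2_eq_square algebra_simps)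
  then show ?thesis unfolding polyg_def by simp
qed

definition rep :: "nat \<Rightarrow> int \<Rightarrow> int \<Rightarrow> bool" where
  "rep k q L \<longleftrightarrow> (\<exists>x::nat\<Rightarrow>int. (\<Sum>i\<le>k. 2^i * tri (x i)) = q \<and> (\<Sum>i\<le>k. 2^i * x i) = L)"

lemma rep_zero: "tri L = q \<Longrightarrow> rep 0 q L"
  unfolding rep_def by (rule exI[of _ "\<lambda>_. L"]) simp

lemma rep_step:
  assumes "rep k q L"
  shows "rep (Suc k) (tri y + 2 * q) (y + 2 * L)"
proof -
  obtain x where x: "(\<Sum>i\<le>k. 2^i * tri (x i)) = q" "(\<Sum>i\<le>k. 2^i * x i) = L"
    using assms unfolding rep_def by blast
  define x' where "x' = (\<lambda>i. if i = 0 then y else x (i - 1))"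
  have a: "(\<Sum>i\<le>k. 2 * (2^i * tri (x i))) = 2 * q"
    by (simp add: sum_distrib_left[symmetric] x(1))
  have b: "(\<Sum>i\<le>k. 2 * (2^i * x i)) = 2 * L"
    by (simp add: sum_distrib_left[symmetric] x(2))
  have 1: "(\<Sum>i\<le>Suc k. 2^i * tri (x' i)) = tri y + 2 * q"
    unfolding sum.atMost_Suc_shift x'_def using a
    by (simp add: mult.assoc)
  have 2: "(\<Sum>i\<le>Suc k. 2^i * x' i) = y + 2 * L"
    unfolding sum.atMost_Suc_shift x'_def using b
    by (simp add: mult.assoc)
  show ?thesis unfolding rep_def using 1 2 by blast
qed

lemma geom_int: "(\<Sum>i\<le>k. (2::int)^i) = 2^(Suc k) - 1"
  by (induction k) simp_all

lemma rep_sym: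
  assumes "rep k q L"
  shows "rep k q (2^(Suc k) - 1 - L)"
proof -
  obtain x where x: "(\<Sum>i\<le>k. 2^i * tri (x i)) = q" "(\<Sum>i\<le>k. 2^i * x i) = L"
    using assms unfolding rep_def by blast
  have 1: "(\<Sum>i\<le>k. 2^i * tri (1 - x i)) = q" using x(1) by (simp add: tri_sym)
  have "(\<Sum>i\<le>k. 2^i * (1 - x i)) = (\<Sum>i\<le>k. (2::int)^i) - (\<Sum>i\<le>k. 2^i * x i)"
    by (simp add: algebra_simps sum_subtractf)
  then have 2: "(\<Sum>i\<le>k. 2^i * (1 - x i)) = 2^(Suc k) - 1 - L" using x(2) geom_int by simp
  show ?thesis unfolding rep_def using 1 2 by (intro exI[of _ "\<lambda>i. 1 - x i"]) simp
qed

fun reach :: "nat \<Rightarrow> int \<Rightarrow> int \<Rightarrow> bool" where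
  "reach 0 q L = (tri L = q)"
| "reach (Suc k) q L = list_ex (\<lambda>y. tri y \<le> q \<and> even (q - tri y) \<and> even (L - y) \<and>
        reach k ((q - tri y) div 2) ((L - y) div 2)) [-q..q+1]"

lemma reach_rep: "reach k q L \<Longrightarrow> rep k q L"
proof (induction k arbitrary: q L)
  case 0
  then show ?case by (simp add: rep_zero)
next
  case (Suc k)
  then obtain y where y: "even (q - tri y)" "even (L - y)"
     "reach k ((q - tri y) div 2) ((L - y) div 2)"
    by (auto simp: list_ex_iff)
  have "rep (Suc k) (tri y + 2 * ((q - tri y) div 2)) (y + 2 * ((L - y) div 2))"
    using Suc.IH[OF y(3)] by (rule rep_step)
  moreover have "tri y + 2 * ((q - tri y) div 2) = q" using y(1) by simp
  moreover have "y + 2 * ((L - y) div 2) = L" using y(2) by simp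
  ultimately show ?case by simp
qed

definition lowholes :: "int \<Rightarrow> int list" where
  "lowholes q = (if q = 1 then [0] else if q = 2 then [0,1] else if q = 3 then [-1]
     else if q = 4 then [0,1,2,3] else if q = 5 then [-1] else if q = 6 then [-2]
     else if q = 7 then [-3,0] else if q = 8 then [0,4] else if q = 9 then [1]
     else if q = 10 then [-1] else if q = 11 then [0] else if q = 12 then [-4] else [])"

lemma lowholes_bound: "h \<in> set (lowholes q) \<Longrightarrow> -4 \<le> h \<and> h \<le> 4"
  unfolding lowholes_def by (auto split: if_splits)

lemma lowholes_big: "q > 12 \<Longrightarrow> lowholes q = []"
  unfolding lowholes_def by auto

lemma lowholes_zero: "lowholes 0 = []"
  unfolding lowholes_def by auto

definition hole :: "int \<Rightarrow> int \<Rightarrow> int \<Rightarrow> bool" where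
  "hole q L W \<longleftrightarrow> L \<in> set (lowholes q) \<or> W - L \<in> set (lowholes q)"

definition Inv :: "nat \<Rightarrow> bool" where
  "Inv k \<longleftrightarrow> (\<forall>q L. 0 \<le> q \<and> q \<le> 2^(Suc k) - 1 \<and> -q \<le> L \<and> L \<le> 2^(Suc k) - 1 + q
      \<and> \<not> hole q L (2^(Suc k) - 1) \<longrightarrow> rep k q L)"

lemma base_check:
  "list_all (\<lambda>q. list_all (\<lambda>L. hole q L 31 \<or> reach 4 q L) [-q..31+q]) [0..31]"
  unfolding hole_def by code_simp

lemma stepA_check:
  "list_all (\<lambda>Q. list_all (\<lambda>L. L \<in> set (lowholes Q) \<or>
      list_ex (\<lambda>y. tri y \<le> Q \<and> even (Q - tri y) \<and> even (L - y) \<and>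
         -((Q - tri y) div 2) \<le> (L - y) div 2 \<and>
         (L - y) div 2 \<notin> set (lowholes ((Q - tri y) div 2)) \<and> (L - y) div 2 \<le> 11) [-5..6])
    [-Q..11]) [0..28]"
  by code_simp

lemma Inv4: "Inv 4"
  unfolding Inv_def
proof (intro allI impI)
  fix q L :: int
  assume a: "0 \<le> q \<and> q \<le> 2^(Suc 4) - 1 \<and> -q \<le> L \<and> L \<le> 2^(Suc 4) - 1 + q
      \<and> \<not> hole q L (2^(Suc 4) - 1)"
  have h: "\<forall>q\<in>{0..31}. \<forall>L\<in>{-q..31+q}. hole q L 31 \<or> reach 4 q L"
    using base_check by (simp only: list_all_iff set_upto)
  have "q \<in> {0..31}" using a by auto
  with h have "\<forall>L\<in>{-q..31+q}. hole q L 31 \<or> reach 4 q L" by blast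
  moreover have "L \<in> {-q..31+q}" using a by auto
  ultimately have "hole q L 31 \<or> reach 4 q L" by blast
  then have "reach 4 q L" using a by simp
  then show "rep 4 q L" by (rule reach_rep)
qed

lemma tri_vals: "tri 0 = 0" "tri 1 = 0" "tri (-1) = 1" "tri 2 = 1" "tri (-2) = 3"
  unfolding tri_def by simp_all

lemma not_hole_far:
  assumes "5 \<le> L'" "5 \<le> W - L'"
  shows "\<not> hole q L' W"
  using assms lowholes_bound unfolding hole_def by fastforce

lemma step_arith:
  fixes W Q L :: int
  assumes W: "W \<ge> 31" and Q: "0 \<le> Q" "Q \<le> 2*W+1" and L: "-Q \<le> L" "L \<le> W"
    and nh: "\<not> hole Q L (2*W+1)"
  shows "\<exists>y. even (Q - tri y) \<and> even (L - y) \<and>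
     0 \<le> (Q - tri y) div 2 \<and> (Q - tri y) div 2 \<le> W \<and>
     -((Q - tri y) div 2) \<le> (L - y) div 2 \<and> (L - y) div 2 \<le> W + (Q - tri y) div 2 \<and>
     \<not> hole ((Q - tri y) div 2) ((L - y) div 2) W"
proof (cases "Q \<le> 28")
  case Qs: True
  show ?thesis
  proof (cases "L \<le> 11")
    case Ls: True
    have h: "\<forall>Q\<in>{0..28}. \<forall>L\<in>{-Q..11}. L \<in> set (lowholes Q) \<or>
      (\<exists>y\<in>{-5..6}. tri y \<le> Q \<and> even (Q - tri y) \<and> even (L - y) \<and>
         -((Q - tri y) div 2) \<le> (L - y) div 2 \<and>
         (L - y) div 2 \<notin> set (lowholes ((Q - tri y) div 2)) \<and> (L - y) div 2 \<le> 11)"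
      using stepA_check by (simp only: list_all_iff list_ex_iff set_upto)
    have "Q \<in> {0..28}" using Q Qs by auto
    with h have "\<forall>L\<in>{-Q..11}. L \<in> set (lowholes Q) \<or>
      (\<exists>y\<in>{-5..6}. tri y \<le> Q \<and> even (Q - tri y) \<and> even (L - y) \<and>
         -((Q - tri y) div 2) \<le> (L - y) div 2 \<and>
         (L - y) div 2 \<notin> set (lowholes ((Q - tri y) div 2)) \<and> (L - y) div 2 \<le> 11)" by blast
    moreover have "L \<in> {-Q..11}" using L Ls by auto
    moreover have "L \<notin> set (lowholes Q)" using nh unfolding hole_def by blast
    ultimately obtain y where y: "tri y \<le> Q" "even (Q - tri y)" "even (L - y)"
         "-((Q - tri y) div 2) \<le> (L - y) div 2"
         "(L - y) div 2 \<notin> set (lowholes ((Q - tri y) div 2))" "(L - y) div 2 \<le> 11"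
      by blast
    have t: "tri y \<ge> 0" by (rule tri_nonneg)
    have "W - (L - y) div 2 \<notin> set (lowholes ((Q - tri y) div 2))"
      using lowholes_bound y(6) W by fastforce
    then have "\<not> hole ((Q - tri y) div 2) ((L - y) div 2) W"
      using y(5) unfolding hole_def by blast
    moreover have "0 \<le> (Q - tri y) div 2" "(Q - tri y) div 2 \<le> W" using y(1) t Qs W by auto
    moreover have "(L - y) div 2 \<le> W + (Q - tri y) div 2" using y(6) W y(1) by auto
    ultimately show ?thesis using y by blast
  next
    case Lb: False
    define y :: int where "y = (if even Q then (if even L then 0 else 1) else (if odd L then -1 else 2))"
    have yc: "(even Q \<and> even L \<and> y = 0) \<or> (even Q \<and> odd L \<and> y = 1) \<or>
        (odd Q \<and> odd L \<and> y = -1) \<or> (odd Q \<and> even L \<and> y = 2)" unfolding y_def by auto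
    have ty: "tri y = (if even Q then 0 else 1)" using yc by (auto simp: tri_vals)
    have eq: "even (Q - tri y)"
      using ty by (cases "even Q") simp_all
    have ey: "even (L - y)" unfolding y_def by (cases "even Q"; cases "even L") simp_all
    obtain p where p: "Q - tri y = 2 * p" using eq by (metis evenE)
    obtain h where h: "L - y = 2 * h" using ey by (metis evenE)
    have pd: "(Q - tri y) div 2 = p" using p by simp
    have hd: "(L - y) div 2 = h" using h by simp
    have yb: "-1 \<le> y" "y \<le> 2" using yc by auto
    have tb: "0 \<le> tri y" "tri y \<le> 1" using ty by auto
    have Qt: "tri y \<le> Q"
    proof (cases "even Q")
      case True then show ?thesis using ty Q by simp
    next
      case False
      then have "Q \<noteq> 0" by auto
      then show ?thesis using ty Q False by simp
    qed
    have h5: "5 \<le> h" using Lb h yb by linarith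
    have h6: "5 \<le> W - h" using L(2) W h yb by linarith
    have "\<not> hole p h W" using h5 h6 by (rule not_hole_far)
    moreover have p0: "0 \<le> p" using Qt p by linarith
    moreover have "-p \<le> h" using p0 h5 by linarith
    moreover have "h \<le> W + p" using h6 p0 by linarith
    moreover have "p \<le> W" using p tb Qs W by linarith
    ultimately show ?thesis using eq ey
      apply (intro exI[of _ y])
      apply (simp only: pd hd)
      by blast
  qed
next
  case Qb: False
  have Q29: "29 \<le> Q" using Qb by simp
  define y :: int where "y = (if even Q then (if even L then 0 else 1) else
     (if odd L then -1 else if L \<ge> 3 - Q then 2 else -2))"
  have yc: "(even Q \<and> even L \<and> y = 0) \<or> (even Q \<and> odd L \<and> y = 1) \<or>
        (odd Q \<and> odd L \<and> y = -1) \<or> (odd Q \<and> even L \<and> L \<ge> 3 - Q \<and> y = 2) \<or>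
        (odd Q \<and> even L \<and> L < 3 - Q \<and> y = -2)" unfolding y_def by auto
  have ty: "tri y = (if even Q then 0 else if y = -2 then 3 else 1)" using yc by (auto simp: tri_vals)
  have eq: "even (Q - tri y)"
    using ty by (cases "even Q") simp_all
  have ey: "even (L - y)" unfolding y_def by (cases "even Q"; cases "even L") simp_all
  obtain p where p: "Q - tri y = 2 * p" using eq by (metis evenE)
  obtain h where h: "L - y = 2 * h" using ey by (metis evenE)
  have pd: "(Q - tri y) div 2 = p" using p by simp
  have hd: "(L - y) div 2 = h" using h by simp
  have tb: "0 \<le> tri y" "tri y \<le> 3" using ty by auto
  have p13: "13 \<le> p" using Q29 p tb by linarith
  have "lowholes p = []" using p13 by (intro lowholes_big) auto
  then have "\<not> hole p h W" unfolding hole_def by simp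
  moreover have "0 \<le> p" using p13 by simp
  moreover have "p \<le> W" using p tb Q W by linarith
  moreover have "h \<le> W + p"
  proof -
    have "y \<ge> -2" using yc by auto
    then show ?thesis using h L(2) W p13 by linarith
  qed
  moreover have "-p \<le> h"
  proof -
    show ?thesis
    proof (cases "even Q")
      case True
      then have "y = 0 \<or> y = 1" "tri y = 0" using yc ty by auto
      then show ?thesis using p h L(1) True by (auto elim!: evenE)
    next
      case False
      then obtain Q2 where Q2: "Q = 2 * Q2 + 1" by (metis oddE)
      show ?thesis
      proof (cases "y = -2")
        case True
        then have "L < 3 - Q" "even L" using yc by auto
        then have "L = 1 - Q" using L(1) Q2 by (auto elim!: evenE)
        then show ?thesis using p h ty True False by simp
      next
        case yn: False
        then have "tri y = 1" using ty False by simp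
        moreover have "L - y \<ge> 1 - Q"
        proof -
          have "(odd L \<and> y = -1) \<or> (even L \<and> L \<ge> 3 - Q \<and> y = 2)" using yc yn False by auto
          then show ?thesis using L(1) Q2 by (auto elim!: evenE oddE)
        qed
        ultimately show ?thesis using p h by linarith
      qed
    qed
  qed
  ultimately show ?thesis using eq ey
      apply (intro exI[of _ y])
      apply (simp only: pd hd)
      by blast
qed

lemma pow_ge32: "k \<ge> 4 \<Longrightarrow> (2::int)^(Suc k) \<ge> 32"
proof -
  assume "k \<ge> 4"
  then have "(2::int)^5 \<le> 2^(Suc k)" by (intro power_increasing) auto
  then show ?thesis by simp
qed

lemma Inv_step:
  assumes I: "Inv k" and k: "k \<ge> 4"
  shows "Inv (Suc k)"
  unfolding Inv_def
proof (intro allI impI)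
  fix Q L :: int
  define W :: int where "W = 2^(Suc k) - 1"
  have W31: "W \<ge> 31" using pow_ge32[OF k] unfolding W_def by simp
  have WS: "(2::int)^(Suc (Suc k)) - 1 = 2*W + 1" unfolding W_def by simp
  have Ik: "\<forall>q L. 0 \<le> q \<and> q \<le> W \<and> -q \<le> L \<and> L \<le> W + q \<and> \<not> hole q L W \<longrightarrow> rep k q L"
    using I unfolding Inv_def W_def by simp
  assume a: "0 \<le> Q \<and> Q \<le> 2^(Suc (Suc k)) - 1 \<and> -Q \<le> L \<and> L \<le> 2^(Suc (Suc k)) - 1 + Q
      \<and> \<not> hole Q L (2^(Suc (Suc k)) - 1)"
  then have a': "0 \<le> Q" "Q \<le> 2*W+1" "-Q \<le> L" "L \<le> 2*W+1+Q" "\<not> hole Q L (2*W+1)"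
    unfolding WS by auto
  have main: "rep (Suc k) Q L'" if t: "-Q \<le> L'" "L' \<le> W" "\<not> hole Q L' (2*W+1)" for L'
  proof -
    obtain y where y: "even (Q - tri y)" "even (L' - y)" "0 \<le> (Q - tri y) div 2"
      "(Q - tri y) div 2 \<le> W" "-((Q - tri y) div 2) \<le> (L' - y) div 2"
      "(L' - y) div 2 \<le> W + (Q - tri y) div 2" "\<not> hole ((Q - tri y) div 2) ((L' - y) div 2) W"
      using step_arith[OF W31 a'(1) a'(2) t(1) t(2) t(3)] by blast
    have "rep k ((Q - tri y) div 2) ((L' - y) div 2)"
      using Ik y(3-7) by blast
    then have "rep (Suc k) (tri y + 2 * ((Q - tri y) div 2)) (y + 2 * ((L' - y) div 2))"
      by (rule rep_step)
    then show ?thesis using y(1,2) by simp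
  qed
  show "rep (Suc k) Q L"
  proof (cases "L \<le> W")
    case True then show ?thesis using main a' by blast
  next
    case False
    define L2 where "L2 = 2*W + 1 - L"
    have "-Q \<le> L2" "L2 \<le> W" using a' False unfolding L2_def by auto
    moreover have "\<not> hole Q L2 (2*W+1)" using a'(5) unfolding hole_def L2_def by auto
    ultimately have "rep (Suc k) Q L2" by (rule main)
    then have "rep (Suc k) Q (2^(Suc (Suc k)) - 1 - L2)" by (rule rep_sym)
    then show ?thesis unfolding WS L2_def by simp
  qed
qed

lemma Inv_all: "k \<ge> 4 \<Longrightarrow> Inv k"
proof (induction k rule: nat_induct_at_least)
  case base then show ?case by (rule Inv4)
next
  case (Suc k) then show ?case using Inv_step by blast
qed

lemma tri_shift: "tri (x + 1) = tri x + x"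
  using tri_mul[of x] tri_mul[of "x+1"] by (simp add: algebra_simps)

lemma tri_exists_nat: "\<exists>b\<ge>0. tri (b+1) \<le> int Z \<and> int Z < tri (b+2)"
proof (induction Z)
  case 0
  show ?case by (rule exI[of _ 0]) (simp add: tri_def)
next
  case (Suc Z)
  then obtain b where b: "b \<ge> 0" "tri (b+1) \<le> int Z" "int Z < tri (b+2)" by blast
  show ?case
  proof (cases "int (Suc Z) < tri (b+2)")
    case True then show ?thesis using b by (intro exI[of _ b]) auto
  next
    case False
    then have e: "int (Suc Z) = tri (b+2)" using b by auto
    have "tri (b+3) = tri (b+2) + (b+2)" using tri_shift[of "b+2"] by (simp add: add.assoc)
    then show ?thesis using e b by (intro exI[of _ "b+1"]) (auto simp: add.commute)
  qed
qed

lemma tri_exists: "Z \<ge> 0 \<Longrightarrow> \<exists>b\<ge>0. tri (b+1) \<le> Z \<and> Z < tri (b+2)"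
  using tri_exists_nat[of "nat Z"] by simp

lemma tri_neg: "tri (-a) = tri (a + 1)"
  using tri_mul[of "-a"] tri_mul[of "a+1"] by (simp add: algebra_simps)

lemma tri_mono: "0 \<le> a \<Longrightarrow> a \<le> b \<Longrightarrow> tri (a+1) \<le> tri (b+1)"
proof -
  assume "0 \<le> a" "a \<le> b"
  then have "(a+1)*a \<le> (b+1)*b" by (intro mult_mono) auto
  then show ?thesis using tri_mul[of "a+1"] tri_mul[of "b+1"] by (simp add: algebra_simps)
qed

lemma good_Q:
  fixes M Q :: int and k :: nat
  assumes k: "k \<ge> 4" and D: "2^k \<ge> M - 1" and M: "M \<ge> 12" and Q: "0 \<le> Q"
    and H: "\<And>b. 0 \<le> b \<Longrightarrow> tri (b+1) \<le> Q - 26 \<Longrightarrow> 3*b + 27 \<le> 2 * 2^k \<and> 2*b \<le> M + 47"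
  shows "\<exists>lo. lo \<le> M \<and> 2*lo \<le> 2^(Suc k) - 1 - M \<and> (Q = 0 \<longrightarrow> lo \<le> 0) \<and>
     (\<forall>L. lo \<le> L \<and> L \<le> 2^(Suc k) - 1 - lo \<longrightarrow> rep k Q L)"
proof -
  define D :: int where "D = 2^k"
  have D16: "D \<ge> 16"
  proof -
    have "(2::int)^4 \<le> 2^k" using k by (intro power_increasing) auto
    then show ?thesis unfolding D_def by simp
  qed
  have WD: "(2::int)^(Suc k) - 1 = 2*D - 1" unfolding D_def by simp
  have DM: "D \<ge> M - 1" using assms(2) unfolding D_def by simp
  show ?thesis
  proof (cases "Q \<le> 2*D - 1")
    case True
    have I: "Inv k" using k by (rule Inv_all)
    have Ik: "\<forall>q L. 0 \<le> q \<and> q \<le> 2*D - 1 \<and> -q \<le> L \<and> L \<le> 2*D - 1 + q \<and> \<not> hole q L (2*D-1) \<longrightarrow> rep k q L"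
      using I unfolding Inv_def WD by simp
    define lo :: int where "lo = (if Q = 0 then 0 else 5)"
    have "\<forall>L. lo \<le> L \<and> L \<le> 2*D - 1 - lo \<longrightarrow> rep k Q L"
    proof (intro allI impI)
      fix L assume L: "lo \<le> L \<and> L \<le> 2*D - 1 - lo"
      have "\<not> hole Q L (2*D - 1)"
      proof (cases "Q = 0")
        case True then show ?thesis unfolding hole_def by (simp add: lowholes_zero)
      next
        case False
        then have "5 \<le> L" "5 \<le> (2*D - 1) - L" using L unfolding lo_def by auto
        then show ?thesis by (rule not_hole_far)
      qed
      moreover have "0 \<le> Q" "Q \<le> 2*D - 1" "-Q \<le> L" "L \<le> 2*D - 1 + Q"
        using Q True L unfolding lo_def by (auto split: if_splits)
      ultimately show "rep k Q L" using Ik by blast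
    qed
    moreover have "lo \<le> M" "2*lo \<le> 2*D - 1 - M" "Q = 0 \<longrightarrow> lo \<le> 0"
      using M DM D16 unfolding lo_def by auto
    ultimately show ?thesis unfolding WD by blast
  next
    case False
    then have Q32: "Q \<ge> 32" using D16 by simp
    obtain b where b: "b \<ge> 0" "tri (b+1) \<le> Q - 26" "Q - 26 < tri (b+2)"
      using tri_exists[of "Q - 26"] Q32 by auto
    have b2: "b \<ge> 2"
    proof (rule ccontr)
      assume "\<not> b \<ge> 2"
      then have "b = 0 \<or> b = 1" using b(1) by auto
      then show False using b(3) Q32 by (auto simp: tri_def)
    qed
    have Hb: "3*b + 27 \<le> 2 * D" "2*b \<le> M + 47" using H[OF b(1) b(2)] unfolding D_def by auto
    have k5: "k \<ge> 5"
    proof (rule ccontr)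
      assume "\<not> k \<ge> 5"
      then have "k = 4" using k by auto
      then show False using Hb b2 unfolding D_def by simp
    qed
    define k' where "k' = k - 1"
    have kk: "k = Suc k'" "k' \<ge> 4" using k5 unfolding k'_def by auto
    have I: "Inv k'" using kk(2) by (rule Inv_all)
    have Dk: "(2::int)^(Suc k') - 1 = D - 1" unfolding D_def kk by simp
    have Ik: "\<forall>q L. 0 \<le> q \<and> q \<le> D - 1 \<and> -q \<le> L \<and> L \<le> D - 1 + q \<and> \<not> hole q L (D-1) \<longrightarrow> rep k' q L"
      using I unfolding Inv_def Dk by simp
    have trib: "tri (b+2) = tri (b+1) + (b+1)" using tri_shift[of "b+1"] by (simp add: add.assoc)
    have trib2: "tri (b+1) = tri (b - 1) + (2*b - 1)"
      using tri_shift[of "b"] tri_shift[of "b - 1"] by (simp add: algebra_simps)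
    define a where "a = (if even (Q - tri (b+1)) then b else b - 2)"
    have ta: "even (Q - tri (a+1))"
    proof (cases "even (Q - tri (b+1))")
      case True then show ?thesis unfolding a_def by simp
    next
      case False
      define X where "X = Q - tri (b+1)"
      have e: "Q - tri (b - 1) = X + (2*b - 1)" using trib2 unfolding X_def by simp
      have "even (X + (2*b - 1))" using False unfolding X_def by simp
      then have "even (Q - tri (b - 1))" using e by simp
      then show ?thesis using False unfolding a_def by simp
    qed
    have a0: "0 \<le> a" "a \<le> b" using b2 unfolding a_def by auto
    have tab: "tri (a+1) \<le> tri (b+1)" using tri_mono[OF a0] .
    have upper: "Q - tri (a+1) \<le> 3*b + 25"
    proof (cases "even (Q - tri (b+1))")
      case True then show ?thesis unfolding a_def using b(3) trib b2 by simp
    next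
      case False then show ?thesis unfolding a_def using b(3) trib trib2 by simp
    qed
    obtain q where q: "Q - tri (a+1) = 2*q" using ta by (metis evenE)
    have q13: "13 \<le> q" using q b(2) tab by linarith
    have qD: "q \<le> D - 1" using q upper Hb(1) by linarith
    have nh: "\<And>L'. \<not> hole q L' (D - 1)"
      using lowholes_big[of q] q13 unfolding hole_def by simp
    define lo where "lo = a + 1 - 2*q"
    have "\<forall>L. lo \<le> L \<and> L \<le> 2*D - 1 - lo \<longrightarrow> rep k Q L"
    proof (intro allI impI)
      fix L assume L: "lo \<le> L \<and> L \<le> 2*D - 1 - lo"
      define y where "y = (if even (L + a) then -a else a + 1)"
      have ty: "tri y = tri (a+1)" unfolding y_def by (simp add: tri_neg)
      have ey: "even (L - y)" unfolding y_def by (cases "even (L + a)") auto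
      obtain L' where L': "L - y = 2 * L'" using ey by (metis evenE)
      have yb: "y = -a \<or> y = a + 1" unfolding y_def by auto
      have "-q \<le> L'" "L' \<le> D - 1 + q"
        using L L' yb a0 unfolding lo_def by auto
      then have "rep k' q L'" using Ik q13 qD nh by auto
      then have "rep (Suc k') (tri y + 2*q) (y + 2*L')" by (rule rep_step)
      moreover have "tri y + 2*q = Q" using ty q by simp
      moreover have "y + 2*L' = L" using L' by simp
      ultimately show "rep k Q L" using kk by simp
    qed
    moreover have "lo \<le> M" "2*lo \<le> 2*D - 1 - M" "Q = 0 \<longrightarrow> lo \<le> 0"
      using a0 q13 Hb DM Q32 assms(3) unfolding lo_def by auto
    ultimately show ?thesis unfolding WD by blast
  qed
qed

lemma rep_represents:
  assumes "rep k Q L"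
  shows "represents m (map (\<lambda>i. 2 ^ i) [0..<k+1]) ((m-2)*Q + L)"
proof -
  obtain x where x: "(\<Sum>i\<le>k. 2^i * tri (x i)) = Q" "(\<Sum>i\<le>k. 2^i * x i) = L"
    using assms unfolding rep_def by blast
  have "(\<Sum>i<length (map (\<lambda>i. (2::int) ^ i) [0..<k+1]). map (\<lambda>i. 2 ^ i) [0..<k+1] ! i * polyg m (x i))
      = (\<Sum>i\<le>k. 2^i * ((m-2) * tri (x i) + x i))"
  proof -
    have "(\<Sum>i<length (map (\<lambda>i. (2::int) ^ i) [0..<k+1]). map (\<lambda>i. 2 ^ i) [0..<k+1] ! i * polyg m (x i))
        = (\<Sum>i<Suc k. 2^i * polyg m (x i))"
      by (intro sum.cong) (auto simp: nth_append)
    also have "\<dots> = (\<Sum>i\<le>k. 2^i * ((m-2) * tri (x i) + x i))"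
      by (simp add: lessThan_Suc_atMost polyg_tri)
    finally show ?thesis .
  qed
  also have "\<dots> = (\<Sum>i\<le>k. (m-2) * (2^i * tri (x i)) + 2^i * x i)"
    by (intro sum.cong) (auto simp: algebra_simps)
  also have "\<dots> = (m-2) * (\<Sum>i\<le>k. 2^i * tri (x i)) + (\<Sum>i\<le>k. 2^i * x i)"
    by (simp only: sum.distrib sum_distrib_left)
  finally show ?thesis unfolding represents_def using x by blast
qed

lemma C_ge1:
  assumes "good_const C"
  shows "C \<ge> 1"
proof (rule ccontr)
  assume "\<not> C \<ge> 1"
  then have "\<forall>N::int. 1 \<le> N \<and> real_of_int N \<le> C * real_of_int (3 - 2) \<longrightarrow> represents 3 [] N"
    by auto
  then have "universal 3 []" using assms unfolding good_const_def by auto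
  then have "represents 3 [] 1" unfolding universal_def by auto
  then show False unfolding represents_def by simp
qed

lemma real_bound:
  fixes t b :: real
  assumes t0: "t > 0" and hb: "(2*b+1)^2 < t^4" and h209: "209 < t^4" and b0: "b \<ge> 0"
  shows "3*b + 33 \<le> 2*(t+2)^2 \<and> 2*b \<le> (t+2)^2 + 45"
proof -
  define T where "T = t^2"
  have t4: "t^4 = T^2" unfolding T_def by (simp add: power_mult[symmetric])
  have T0: "T \<ge> 0" unfolding T_def by simp
  have A: "2*b + 1 < T"
  proof (rule ccontr)
    assume "\<not> 2*b + 1 < T"
    then have "T \<le> 2*b+1" by simp
    then have "T^2 \<le> (2*b+1)^2" using T0 by (intro power_mono) auto
    then show False using hb t4 by simp
  qed
  have t14: "T > 14"
  proof (rule ccontr)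
    assume "\<not> T > 14"
    then have "T^2 \<le> 14^2" using T0 by (intro power_mono) auto
    then show False using h209 t4 by simp
  qed
  have t37: "t > 37/10"
  proof (rule ccontr)
    assume "\<not> t > 37/10"
    then have "t^2 \<le> (37/10)^2" using t0 by (intro power_mono) auto
    moreover have "(37/10::real)^2 < 14" by (simp add: power2_eq_square)
    ultimately show False using t14 unfolding T_def by linarith
  qed
  have e: "(t+2)^2 = T + 4*t + 4" unfolding T_def by (simp add: power2_eq_square algebra_simps)
  have g1: "3*b + 33 \<le> 2*T + 8*t + 8" using A t14 t37 b0 by linarith
  have g2: "2*b \<le> T + 4*t + 49" using A t14 t37 b0 by linarith
  show ?thesis unfolding e using g1 g2 by simp
qed

lemma key_real:
  fixes C :: real and m :: int
  assumes C1: "C \<ge> 1"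
    and hm: "real_of_int m > 2 * ((2 * C + 1/4) powr (1/4) + sqrt 2) ^ 2"
  shows "8*C + 1 < (sqrt m - 2)^4" "sqrt m > 2"
proof -
  define u where "u = (2 * C + 1/4) powr (1/4)"
  have u0: "u \<ge> 0" unfolding u_def by simp
  have u4: "u^4 = 2*C + 1/4"
  proof -
    have "u^4 = (2*C + 1/4) powr (real 4 * (1/4))" unfolding u_def
      using C1 by (subst powr_power) auto
    also have "\<dots> = 2*C + 1/4" using C1 by simp
    finally show ?thesis .
  qed
  have m0: "real_of_int m > 0" using hm by (smt (verit) zero_le_power2)
  define s where "s = sqrt (real_of_int m)"
  have s2: "s^2 = real_of_int m" unfolding s_def using m0 by simp
  have s0: "s \<ge> 0" unfolding s_def using m0 by simp
  have "2 * (u + sqrt 2)^2 = (sqrt 2 * u + 2)^2"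
    by (simp add: power2_eq_square algebra_simps)
  then have "(sqrt 2 * u + 2)^2 < s^2" using hm s2 unfolding u_def by simp
  then have su: "sqrt 2 * u + 2 < s" using s0 by (rule power_less_imp_less_base)
  have su0: "sqrt 2 * u \<ge> 0" using u0 by simp
  then show "s > 2" unfolding s_def[symmetric] using su by simp
  have "(sqrt 2 * u)^2 < (s - 2)^2" using su su0 by (intro power_strict_mono) auto
  then have "2 * u^2 < (s-2)^2" by (simp add: power_mult_distrib)
  then have "(2 * u^2)^2 < ((s-2)^2)^2" using u0 by (intro power_strict_mono) auto
  then have "4 * u^4 < (s-2)^4" by (simp add: power_mult_distrib power_mult[symmetric])
  then show "8*C + 1 < (sqrt m - 2)^4" using u4 unfolding s_def by simp
qed

theorem lemma3p3:
  fixes C :: real and m n :: int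
  assumes hC: "good_const C"
    and hm: "real_of_int m > 2 * ((2 * C + 1/4) powr (1/4) + sqrt 2) ^ 2"
    and hn: "n = \<lceil>log 2 (real_of_int (m - 3))\<rceil>"
  shows "universal m (map (\<lambda>i. 2 ^ i) [0..<nat n + 1])"
proof -
  have C1: "C \<ge> 1" using hC by (rule C_ge1)
  have K: "8*C + 1 < (sqrt m - 2)^4" "sqrt m > 2" using key_real[OF C1 hm] by auto
  define t where "t = sqrt (real_of_int m) - 2"
  have t0: "t > 0" using K unfolding t_def by simp
  have mpos: "real_of_int m \<ge> 0"
  proof (rule ccontr)
    assume "\<not> real_of_int m \<ge> 0"
    then have "sqrt (real_of_int m) \<le> 0" by simp
    then show False using K(2) by linarith
  qed
  have mt: "real_of_int m = (t+2)^2" unfolding t_def using mpos by simp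
  have t4: "8*C + 1 < t^4" using K unfolding t_def by simp
  have m14: "m \<ge> 14"
  proof -
    have tt: "t^4 = (t^2)^2" by (simp add: power_mult[symmetric])
    have "t^2 > 3"
    proof (rule ccontr)
      assume "\<not> t^2 > 3"
      then have "(t^2)^2 \<le> 3^2" by (intro power_mono) auto
      moreover have "(3::real)^2 = 9" by simp
      ultimately show False using t4 tt C1 by linarith
    qed
    have "t > 17/10"
    proof (rule ccontr)
      assume "\<not> t > 17/10"
      then have "t^2 \<le> (17/10)^2" using t0 by (intro power_mono) auto
      moreover have "(17/10::real)^2 < 3" by (simp add: power2_eq_square)
      ultimately show False using \<open>t^2 > 3\<close> by linarith
    qed
    then have "(37/10::real)^2 < (t+2)^2" by (intro power_strict_mono) auto
    moreover have "(37/10::real)^2 > 13" by (simp add: power2_eq_square)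
    ultimately have "real_of_int m > 13" using mt by linarith
    then show ?thesis by simp
  qed
  define k where "k = nat n"
  have lg: "log 2 (real_of_int (m - 3)) > 3"
  proof -
    have "log 2 (8::real) < log 2 (real_of_int (m - 3))"
      using m14 by (subst log_less_cancel_iff) auto
    moreover have "log 2 (8::real) = 3"
    proof -
      show ?thesis using log_pow_cancel[of "2::real" 3] by simp
    qed
    ultimately show ?thesis by simp
  qed
  have n4: "n \<ge> 4"
  proof -
    have "real_of_int n \<ge> log 2 (real_of_int (m - 3))" unfolding hn by simp
    then have "real_of_int n > 3" using lg by simp
    then show ?thesis by simp
  qed
  have k4: "k \<ge> 4" unfolding k_def using n4 by simp
  have pow: "(2::int)^k \<ge> m - 3"
  proof -
    have "real_of_int (m - 3) = 2 powr (log 2 (real_of_int (m - 3)))"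
      using m14 by simp
    also have "\<dots> \<le> 2 powr (real_of_int n)"
      unfolding hn by (intro powr_mono) auto
    also have "real_of_int n = real k" unfolding k_def using n4 by simp
    also have "(2::real) powr (real k) = 2 ^ k" by (simp add: powr_realpow)
    finally have "real_of_int (m - 3) \<le> 2 ^ k" .
    then have "real_of_int (m - 3) \<le> real_of_int ((2::int)^k)" by simp
    then show ?thesis by (simp only: of_int_le_iff)
  qed
  define M where "M = m - 2"
  have M12: "M \<ge> 12" unfolding M_def using m14 by simp
  have DM: "(2::int)^k \<ge> M - 1" unfolding M_def using pow by simp
  have Gq: "\<exists>lo. lo \<le> M \<and> 2*lo \<le> 2^(Suc k) - 1 - M \<and> (Q = 0 \<longrightarrow> lo \<le> 0) \<and>
     (\<forall>L. lo \<le> L \<and> L \<le> 2^(Suc k) - 1 - lo \<longrightarrow> rep k Q L)"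
    if Q: "0 \<le> Q" "real_of_int Q \<le> C" for Q
  proof (rule good_Q[OF k4 DM M12 Q(1)])
    fix b :: int
    assume b: "0 \<le> b" "tri (b+1) \<le> Q - 26"
    have "real_of_int (tri (b+1)) \<le> real_of_int (Q - 26)" using b(2) by (simp only: of_int_le_iff)
    then have tb: "real_of_int (tri (b+1)) \<le> C - 26" using Q(2) by simp
    have sq: "(2*b+1)^2 = 8 * tri (b+1) + 1" using tri_mul[of "b+1"]
      by (simp add: power2_eq_square algebra_simps)
    have sqr: "(2 * real_of_int b + 1)^2 = 8 * real_of_int (tri (b+1)) + 1"
    proof -
      have "real_of_int ((2*b+1)^2) = real_of_int (8 * tri (b+1) + 1)" using sq by simp
      then show ?thesis by simp
    qed
    have h1: "(2 * real_of_int b + 1)^2 < t^4" using sqr tb t4 by linarith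
    have h2: "209 < t^4"
    proof -
      have "real_of_int (tri (b+1)) \<ge> 0" using tri_nonneg[of "b+1"] by simp
      then show ?thesis using tb t4 by linarith
    qed
    have rb: "3 * real_of_int b + 33 \<le> 2*(t+2)^2 \<and> 2 * real_of_int b \<le> (t+2)^2 + 45"
      using real_bound[OF t0 h1 h2] b(1) by simp
    have e1: "real_of_int (3*b + 33) = 3 * real_of_int b + 33" by simp
    have e2: "real_of_int (2*m) = 2*(t+2)^2" using mt by simp
    have e3: "real_of_int (2*b) = 2 * real_of_int b" by simp
    have e4: "real_of_int (m + 45) = (t+2)^2 + 45" using mt by simp
    have "real_of_int (3*b + 33) \<le> real_of_int (2*m)" "real_of_int (2*b) \<le> real_of_int (m + 45)"
      using rb e1 e2 e3 e4 by linarith+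
    then have "3*b + 33 \<le> 2*m" "2*b \<le> m + 45" by (simp_all only: of_int_le_iff)
    then show "3*b + 27 \<le> 2 * 2^k \<and> 2*b \<le> M + 47" using pow unfolding M_def by auto
  qed
  have Wbig: "(2::int)^(Suc k) - 1 \<ge> 2*M - 3" using DM by simp
  have rep_ok: "represents m (map (\<lambda>i. 2 ^ i) [0..<k + 1]) N"
    if N: "1 \<le> N" "real_of_int N \<le> C * real_of_int (m - 2)" for N
  proof -
    define Q where "Q = N div M"
    define r where "r = N mod M"
    have Nqr: "N = M * Q + r" unfolding Q_def r_def by simp
    have r0: "0 \<le> r" "r < M" unfolding r_def using M12 by auto
    have Q0: "0 \<le> Q" unfolding Q_def using N(1) M12 by (simp add: pos_imp_zdiv_nonneg_iff)
    have QC: "real_of_int Q \<le> C"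
    proof -
      have "M * Q \<le> N" using Nqr r0 by simp
      then have "real_of_int M * real_of_int Q \<le> C * real_of_int M"
        using N(2) unfolding M_def by (smt (verit) of_int_le_iff of_int_mult)
      moreover have "real_of_int M > 0" using M12 by simp
      ultimately show ?thesis by (simp add: mult.commute)
    qed
    obtain lo where lo: "lo \<le> M" "2*lo \<le> 2^(Suc k) - 1 - M" "Q = 0 \<longrightarrow> lo \<le> 0"
      "\<forall>L. lo \<le> L \<and> L \<le> 2^(Suc k) - 1 - lo \<longrightarrow> rep k Q L"
      using Gq[OF Q0 QC] by blast
    show ?thesis
    proof (cases "lo \<le> r")
      case True
      have "r \<le> 2^(Suc k) - 1 - lo" using lo(2) r0 Wbig M12 by linarith
      then have "rep k Q r" using lo(4) True by blast
      then have "represents m (map (\<lambda>i. 2 ^ i) [0..<k+1]) ((m-2)*Q + r)" by (rule rep_represents)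
      moreover have "(m-2)*Q + r = N" using Nqr unfolding M_def by (simp add: mult.commute)
      ultimately show ?thesis by simp
    next
      case False
      then have Qn: "Q \<noteq> 0" using lo(3) r0 by auto
      have Q1: "0 \<le> Q - 1" using Q0 Qn by simp
      have QC1: "real_of_int (Q - 1) \<le> C" using QC by simp
      obtain lo' where lo': "lo' \<le> M" "2*lo' \<le> 2^(Suc k) - 1 - M"
        "\<forall>L. lo' \<le> L \<and> L \<le> 2^(Suc k) - 1 - lo' \<longrightarrow> rep k (Q - 1) L"
        using Gq[OF Q1 QC1] by blast
      have "lo' \<le> r + M" "r + M \<le> 2^(Suc k) - 1 - lo'" using lo'(1,2) lo(2) False r0 by linarith+
      then have "rep k (Q - 1) (r + M)" using lo'(3) by blast
      then have "represents m (map (\<lambda>i. 2 ^ i) [0..<k+1]) ((m-2)*(Q-1) + (r + M))" by (rule rep_represents)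
      moreover have "(m-2)*(Q-1) + (r + M) = N" using Nqr unfolding M_def by (simp add: algebra_simps)
      ultimately show ?thesis unfolding M_def by simp
    qed
  qed
  have m3: "m \<ge> 3" using m14 by simp
  have pos: "\<forall>c\<in>set (map (\<lambda>i. (2::int) ^ i) [0..<k + 1]). c > 0" by auto
  show ?thesis
    using hC m3 pos rep_ok unfolding good_const_def k_def by blast
qed

end
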